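(* Let $n\ge 1$, $N=2^n$ and $s=(N-1)/2$. Let $0\le j<N/2$ be an integer and let $z\in\{0,1\}^N$ have Hamming distance strictly less than $N/16$ from the Hadamard codeword $W^{(N)}_j$. Let $$|\Psi_3\rangle=\hat H^{\otimes n}\,\hat U_z\,\hat H^{\otimes n}\,\tfrac{1}{\sqrt2}\left(\left|\tfrac12\right\rangle_s+\left|-\tfrac12\right\rangle_s\right).$$ Then measuring $|\Psi_3\rangle$ in the spin basis yields one of the two states $|\tfrac12+j\rangle_s$, $|-\tfrac12-j\rangle_s$ with probability at least $9/16$, i.e. $$\left|\left\langle \tfrac12+j\,\middle|\,\Psi_3\right\rangle_s\right|^2+\left|\left\langle -\tfrac12-j\,\middle|\,\Psi_3\right\rangle_s\right|^2\ \ge\ \tfrac{9}{16}.$$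
   Context: Work in $\mathbb{C}^N$ with computational basis $\{|y\rangle : y=0,\dots,N-1\}$. The spin basis states $|m\rangle_s$, $m\in\{-s,\dots,s\}$, are identified with computational basis states via $|m\rangle_s=|m+s\rangle$. For $x,y\in\{0,\dots,N-1\}$ let $x\cdot y\in\{0,1\}$ be the inner product modulo 2 of their $n$-bit binary expansions. $\hat H^{\otimes n}|y\rangle=N^{-1/2}\sum_{x=0}^{N-1}(-1)^{x\cdot y}|x\rangle$. The Hadamard codeword $W^{(N)}_j\in\{0,1\}^N$ has bit $x\cdot j$ at position $x\in\{0,\dots,N-1\}$. For $z\in\{0,1\}^N$, $\hat U_z$ is the diagonal unitary $\hat U_z|x\rangle=(-1)^{z_x}|x\rangle$. Strings at Hamming distance less than $N/16$ from $W^{(N)}_j$ are called codewords with fewer than $N/16$ unrestricted errors (the set $\Xi^{(N)}_j$). *)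

theory Defs
  imports Complex_Main
begin

text \<open>Vectors in C^N (N = 2^n) are functions nat => complex; only indices y < N matter.\<close>

definition bdot :: "nat \<Rightarrow> nat \<Rightarrow> nat \<Rightarrow> nat" where
  "bdot n x y = (\<Sum>i<n. of_bool (bit x i \<and> bit y i)) mod 2"

definition hadamard_codeword :: "nat \<Rightarrow> nat \<Rightarrow> nat \<Rightarrow> bool" where
  "hadamard_codeword n j x = (bdot n x j = 1)"

definition hamming_dist :: "nat \<Rightarrow> (nat \<Rightarrow> bool) \<Rightarrow> (nat \<Rightarrow> bool) \<Rightarrow> nat" where
  "hamming_dist N u v = card {x. x < N \<and> u x \<noteq> v x}"

definition hadamard_n :: "nat \<Rightarrow> (nat \<Rightarrow> complex) \<Rightarrow> (nat \<Rightarrow> complex)" where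
  "hadamard_n n v = (\<lambda>x. complex_of_real (1 / sqrt (2 ^ n)) * (\<Sum>y<2^n. (-1::complex) ^ bdot n x y * v y))"

definition U_op :: "(nat \<Rightarrow> bool) \<Rightarrow> (nat \<Rightarrow> complex) \<Rightarrow> (nat \<Rightarrow> complex)" where
  "U_op z v = (\<lambda>x. (if z x then -1 else 1::complex) * v x)"

text \<open>Spin basis state |m>_s with s = (N-1)/2, identified with |m+s>.\<close>
definition spin_ket :: "nat \<Rightarrow> real \<Rightarrow> (nat \<Rightarrow> complex)" where
  "spin_ket n m = (\<lambda>y. if real y = m + (2 ^ n - 1) / 2 then 1 else 0)"

definition braket :: "nat \<Rightarrow> (nat \<Rightarrow> complex) \<Rightarrow> (nat \<Rightarrow> complex) \<Rightarrow> complex" where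
  "braket N u v = (\<Sum>y<N. cnj (u y) * v y)"

end

theory Submission imports Defs begin

lemma hi_bit: "(x::nat) < 2^m \<Longrightarrow> m \<le> i \<Longrightarrow> \<not> bit x i"
proof -
  assume "x < 2^m" "m \<le> i"
  then have "x < 2^i" using power_increasing[of m i "2::nat"] by linarith
  then show ?thesis by (simp add: bit_iff_odd)
qed

lemma hi_bit': "(x::nat) < 2^m \<Longrightarrow> bit x i \<Longrightarrow> i < m"
  using hi_bit not_le by blast

lemma sg_prod: "(-1::int)^bdot n x y = (\<Prod>i<n. if bit x i \<and> bit y i then -1 else 1)"
proof -
  have "(-1::int)^bdot n x y = (-1)^(\<Sum>i<n. of_bool (bit x i \<and> bit y i)::nat)"
    unfolding bdot_def by (simp add: minus_one_power_iff)
  also have "\<dots> = (\<Prod>i<n. (-1)^(of_bool (bit x i \<and> bit y i)::nat))"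
    by (simp only: power_sum)
  also have "\<dots> = (\<Prod>i<n. if bit x i \<and> bit y i then -1 else 1)"
    by (rule prod.cong) auto
  finally show ?thesis .
qed

lemma bdot_sym: "bdot n x y = bdot n y x"
  unfolding bdot_def by (simp add: conj_commute)

lemma sum_2M: "(\<Sum>x<2*M. f x) = (\<Sum>x<M. f (2*x) + f (2*x+1::nat)) " for f :: "nat \<Rightarrow> 'a::comm_monoid_add"
  by (induction M) (simp_all add: add.assoc)

lemma sum_prod_bits: "(\<Sum>x<(2::nat)^n. \<Prod>i<n. g i (bit x i)) = (\<Prod>i<n. g i False + g i True)"
  for g :: "nat \<Rightarrow> bool \<Rightarrow> int"
proof (induction n arbitrary: g)
  case 0 then show ?case by (simp add: lessThan_Suc)
next
  case (Suc n)
  define P where "P (x::nat) = (\<Prod>i<n. g (Suc i) (bit x i))" for x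
  have e: "(\<Prod>i<Suc n. g i (bit x i)) = g 0 (odd x) * P (x div 2)" for x :: nat
    unfolding P_def prod.lessThan_Suc_shift by (simp add: bit_Suc bit_0)
  have "(\<Sum>x<(2::nat)^Suc n. \<Prod>i<Suc n. g i (bit x i)) = (\<Sum>x<2*2^n. g 0 (odd x) * P (x div 2))"
    by (simp only: e power_Suc)
  also have "\<dots> = (\<Sum>x<(2::nat)^n. (g 0 False + g 0 True) * P x)"
    by (subst sum_2M) (simp add: algebra_simps)
  also have "\<dots> = (g 0 False + g 0 True) * (\<Prod>i<n. g (Suc i) False + g (Suc i) True)"
    using Suc.IH[of "\<lambda>i. g (Suc i)"] by (simp add: P_def flip: sum_distrib_left)
  also have "\<dots> = (\<Prod>i<Suc n. g i False + g i True)"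
    by (simp only: prod.lessThan_Suc_shift)
  finally show ?case .
qed


definition sg :: "nat \<Rightarrow> nat \<Rightarrow> nat \<Rightarrow> int" where
  "sg n x y = (-1::int)^bdot n x y"

lemma sg_sq: "sg n x y * sg n x y = 1"
  unfolding sg_def by (simp flip: power_mult_distrib)

lemma sg_cases: "sg n x y = 1 \<or> sg n x y = -1"
  unfolding sg_def by (simp add: minus_one_power_iff)

lemma sg_sym: "sg n x y = sg n y x"
  unfolding sg_def by (simp add: bdot_sym)

lemma sg_xor:
  assumes "\<And>i. bit y i = (bit p i \<noteq> bit j i)"
  shows "sg n x y = sg n x p * sg n x j"
  unfolding sg_def sg_prod prod.distrib[symmetric]
  by (rule prod.cong) (auto simp: assms)

lemma orth_ab:
  assumes "n = Suc m"
  shows "(\<Sum>x<(2::nat)^n. sg n x (2^m) * sg n x (2^m - 1)) = 0"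
proof -
  define g where "g i t = (if t \<and> bit ((2::nat)^m) i then -1 else 1) *
     (if t \<and> bit ((2::nat)^m - 1) i then -1 else (1::int))" for i t
  have "(\<Sum>x<(2::nat)^n. sg n x (2^m) * sg n x (2^m - 1)) = (\<Sum>x<(2::nat)^n. \<Prod>i<n. g i (bit x i))"
    unfolding sg_def sg_prod g_def prod.distrib[symmetric]
    by (rule sum.cong) (auto intro!: prod.cong)
  also have "\<dots> = (\<Prod>i<n. g i False + g i True)" by (rule sum_prod_bits)
  also have "\<dots> = 0"
  proof (rule prod_zero)
    have "(0::nat) < 2^m" by simp
    then have "\<not> bit ((2::nat)^m - 1) m" using hi_bit[of "2^m - 1" m m] by simp
    then show "\<exists>i\<in>{..<n}. g i False + g i True = 0"
      using assms by (intro bexI[of _ m]) (auto simp: g_def bit_exp_iff)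
  qed simp
  finally show ?thesis .
qed

lemma y1_xor:
  assumes "j < (2::nat)^m"
  shows "2^m + j = xor (2^m) j"
proof (rule disjunctive_add_eq_xor)
  show "and ((2::nat)^m) j = 0"
    using hi_bit[OF assms] by (intro bit_eqI) (auto simp: bit_and_iff bit_exp_iff)
qed

lemma y2_xor:
  assumes "j < (2::nat)^m"
  shows "2^m - 1 - j = xor (mask m) j"
proof -
  have a: "and (xor (mask m) j) j = 0"
    using hi_bit'[OF assms] by (intro bit_eqI) (auto simp: bit_and_iff bit_xor_iff bit_mask_iff)
  have "xor (mask m) j + j = or (xor (mask m) j) j" by (rule disjunctive_add_eq_or[OF a])
  also have "\<dots> = mask m"
    using hi_bit'[OF assms] by (intro bit_eqI) (auto simp: bit_or_iff bit_xor_iff bit_mask_iff)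
  finally show ?thesis by (simp add: mask_eq_exp_minus_1)
qed

lemma spin_ind:
  assumes "real p = r + (2 ^ n - 1) / 2"
  shows "spin_ket n r = (\<lambda>y. if y = p then 1 else 0)"
  unfolding spin_ket_def using assms by (auto simp flip: assms)

lemma braket_ind:
  assumes "p < N"
  shows "braket N (\<lambda>y. if y = p then 1 else 0) v = v p"
proof -
  have "(\<Sum>y<N. cnj (if y = p then 1 else 0) * v y) = (\<Sum>y<N. if y = p then v y else 0)"
    by (rule sum.cong) auto
  then show ?thesis unfolding braket_def using assms by simp
qed


lemma sum_two_ind:
  fixes f :: "nat \<Rightarrow> complex"
  assumes "a < N" "b < N" "a \<noteq> b"
  shows "(\<Sum>y<N. f y * (d * ((if y = a then 1 else 0) + (if y = b then 1 else 0)))) = d * (f a + f b)"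
proof -
  have "(\<Sum>y<N. f y * (d * ((if y = a then 1 else 0) + (if y = b then 1 else 0))))
      = (\<Sum>y<N. (if y = a then d * f a else 0) + (if y = b then d * f b else 0))"
    by (rule sum.cong) auto
  also have "\<dots> = d * (f a + f b)" using assms by (simp add: sum.distrib algebra_simps)
  finally show ?thesis .
qed

lemma neg1_pow: "(-1::complex)^bdot n x y = of_int (sg n x y)"
  unfolding sg_def by simp

theorem lemma3:
  fixes n j :: nat and z :: "nat \<Rightarrow> bool"
  assumes "n \<ge> 1"
    and "j < 2 ^ n div 2"
    and "real (hamming_dist (2 ^ n) z (hadamard_codeword n j)) < real (2 ^ n) / 16"
  defines "Psi3 \<equiv> hadamard_n n (U_op z (hadamard_n n
              (\<lambda>y. (1 / sqrt 2) * (spin_ket n (1/2) y + spin_ket n (-1/2) y))))"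
  shows "(cmod (braket (2 ^ n) (spin_ket n (1/2 + real j)) Psi3))\<^sup>2
       + (cmod (braket (2 ^ n) (spin_ket n (-1/2 - real j)) Psi3))\<^sup>2 \<ge> 9 / 16"
proof -
  obtain m where n: "n = Suc m" using assms(1) by (cases n) auto
  define N :: nat where "N = 2^n"
  define a :: nat where "a = 2^m"
  define b :: nat where "b = 2^m - 1"
  have jm: "j < 2^m" using assms(2) n by simp
  have aN: "a < N" and bN: "b < N" and ab: "a \<noteq> b"
  proof -
    have q: "a = Suc b" unfolding a_def b_def by simp
    have "a < N" unfolding a_def N_def n by simp
    then show "a < N" "b < N" "a \<noteq> b" using q by auto
  qed
  have y1N: "2^m + j < N" and y2N: "2^m - 1 - j < N"
  proof -
    have "2^m + j < N" using jm unfolding N_def n by simp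
    then show "2^m + j < N" "2^m - 1 - j < N" by auto
  qed
  define c where "c = complex_of_real (1 / sqrt (2^n))"
  define d where "d = complex_of_real (1 / sqrt 2)"
  define \<sigma> :: "nat \<Rightarrow> int" where "\<sigma> x = (if z x then -1 else 1)" for x
  define S where "S y = (\<Sum>x<N. sg n y x * \<sigma> x * (sg n x a + sg n x b))" for y
  have ka: "spin_ket n (1/2) = (\<lambda>y. if y = a then 1 else 0)"
    by (rule spin_ind) (simp add: a_def n field_simps)
  have kb: "spin_ket n (-1/2) = (\<lambda>y. if y = b then 1 else 0)"
    by (rule spin_ind) (simp add: b_def n field_simps of_nat_diff)
  have k1: "spin_ket n (1/2 + real j) = (\<lambda>y. if y = 2^m + j then 1 else 0)"
    by (rule spin_ind) (simp add: n field_simps)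
  have k2: "spin_ket n (-1/2 - real j) = (\<lambda>y. if y = 2^m - 1 - j then 1 else 0)"
    by (rule spin_ind) (use jm in \<open>simp add: n field_simps of_nat_diff\<close>)
  have H1: "hadamard_n n (\<lambda>y. d * (spin_ket n (1/2) y + spin_ket n (-1/2) y))
      = (\<lambda>x. c * (d * of_int (sg n x a + sg n x b)))"
  proof
    fix x
    show "hadamard_n n (\<lambda>y. d * (spin_ket n (1/2) y + spin_ket n (-1/2) y)) x
      = c * (d * of_int (sg n x a + sg n x b))"
      unfolding hadamard_n_def ka kb c_def[symmetric] N_def[symmetric]
      using sum_two_ind[OF aN bN ab, of "\<lambda>y. (-1::complex)^bdot n x y" d]
      by (simp add: neg1_pow)
  qed
  have P: "Psi3 y = of_real (1 / sqrt (2^n) * (1 / sqrt (2^n)) * (1 / sqrt 2)) * of_int (S y)" for y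
  proof -
    have "Psi3 y = c * (\<Sum>x<N. of_int (sg n y x) * (of_int (\<sigma> x) * (c * (d * of_int (sg n x a + sg n x b)))))"
      unfolding Psi3_def d_def[symmetric] H1
      by (simp add: hadamard_n_def U_op_def c_def N_def neg1_pow \<sigma>_def if_distrib cong: if_cong)
    also have "\<dots> = c * c * d * of_int (S y)"
      by (simp add: S_def sum_distrib_left algebra_simps)
    finally show ?thesis by (simp only: c_def d_def of_real_mult)
  qed
  define W where "W = hadamard_codeword n j"
  define E where "E = {x. x < N \<and> z x \<noteq> W x}"
  have cardE: "real (card E) < real N / 16"
    using assms(3) unfolding hamming_dist_def E_def W_def N_def by simp
  define t where "t x = 1 + sg n x a * sg n x b" for x
  have t02: "0 \<le> t x \<and> t x \<le> 2" for x
    using sg_cases[of n x a] sg_cases[of n x b] unfolding t_def by auto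
  have sumt: "(\<Sum>x<N. t x) = int N"
    using orth_ab[OF n] unfolding t_def N_def a_def b_def by (simp add: sum.distrib)
  have sgW: "sg n x j = (if W x then -1 else 1)" for x
  proof -
    have "bdot n x j < 2" unfolding bdot_def by simp
    then have "bdot n x j = 0 \<or> bdot n x j = 1" by auto
    then show ?thesis unfolding sg_def W_def hadamard_codeword_def by auto
  qed
  have Sb: "int N - 4 * int (card E) \<le> S y"
    if hy: "\<And>x. sg n y x = sg n x p * sg n x j" and hp: "p = a \<or> p = b" for y p
  proof -
    have tm: "sg n y x * \<sigma> x * (sg n x a + sg n x b) = (if x \<in> E then - t x else t x)"
      if "x < N" for x
    proof -
      have e: "\<sigma> x = sg n x j * (if x \<in> E then -1 else 1)"
        using that unfolding \<sigma>_def sgW E_def by auto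
      have "sg n y x * \<sigma> x * (sg n x a + sg n x b)
          = (sg n x j * sg n x j) * (if x \<in> E then -1 else 1) * (sg n x p * (sg n x a + sg n x b))"
        unfolding hy e by (simp add: algebra_simps)
      also have "sg n x p * (sg n x a + sg n x b) = t x"
        using hp sg_sq[of n x a] sg_sq[of n x b] unfolding t_def
        by (auto simp: algebra_simps)
      finally show ?thesis by (simp add: sg_sq)
    qed
    have "S y = (\<Sum>x<N. t x - 2 * (if x \<in> E then t x else 0))"
      unfolding S_def by (rule sum.cong) (auto simp: tm)
    also have "\<dots> = int N - 2 * (\<Sum>x\<in>E. t x)"
    proof -
      have "(\<Sum>x<N. (if x \<in> E then t x else 0)) = (\<Sum>x\<in>E. t x)"
        by (subst sum.If_cases) (auto simp: E_def intro!: sum.cong)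
      then show ?thesis by (simp add: sum_subtractf sumt sum_distrib_left[symmetric])
    qed
    finally have eq: "S y = int N - 2 * (\<Sum>x\<in>E. t x)" .
    have "(\<Sum>x\<in>E. t x) \<le> 2 * int (card E)"
      using sum_bounded_above[of E t 2] t02 by (simp add: mult.commute)
    then show ?thesis using eq by linarith
  qed
  have bits1: "bit (2^m + j) i = (bit a i \<noteq> bit j i)" for i
    unfolding y1_xor[OF jm] a_def by (simp add: bit_xor_iff)
  have bits2: "bit (2^m - 1 - j) i = (bit b i \<noteq> bit j i)" for i
    unfolding y2_xor[OF jm] b_def by (simp add: bit_xor_iff mask_eq_exp_minus_1)
  have S1: "int N - 4 * int (card E) \<le> S (2^m + j)"
  proof (rule Sb[of _ a])
    fix x show "sg n (2^m + j) x = sg n x a * sg n x j" by (subst sg_sym) (rule sg_xor[OF bits1])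
  qed simp
  have S2: "int N - 4 * int (card E) \<le> S (2^m - 1 - j)"
  proof (rule Sb[of _ b])
    fix x show "sg n (2^m - 1 - j) x = sg n x b * sg n x j" by (subst sg_sym) (rule sg_xor[OF bits2])
  qed simp
  define k where "k = 1 / sqrt (2^n) * (1 / sqrt (2^n)) * (1 / sqrt (2::real))"
  have kk: "k^2 = 1 / (2 * real N^2)"
    unfolding k_def N_def by (simp add: power_mult_distrib power_divide)
  have Npos: "real N > 0" unfolding N_def by simp
  have fin: "(cmod (of_real k * of_int s))^2 \<ge> 9/32" if "int N - 4 * int (card E) \<le> s" for s
  proof -
    have "real_of_int s \<ge> 3 * real N / 4" using that cardE by linarith
    moreover have "3 * real N / 4 \<ge> 0" using Npos by simp
    ultimately have "real_of_int s * real_of_int s \<ge> (3 * real N / 4) * (3 * real N / 4)"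
      by (intro mult_mono) auto
    then have "(real_of_int s)^2 / (2 * real N^2) \<ge> 9/32"
      using Npos by (simp add: divide_simps power2_eq_square)
    moreover have "(cmod (of_real k * of_int s))^2 = k^2 * (real_of_int s)^2"
      by (simp add: norm_mult power_mult_distrib)
    ultimately show ?thesis using kk by simp
  qed
  have "braket (2 ^ n) (spin_ket n (1/2 + real j)) Psi3 = of_real k * of_int (S (2^m + j))"
    unfolding k1 N_def[symmetric] braket_ind[OF y1N] P k_def ..
  moreover have "braket (2 ^ n) (spin_ket n (-1/2 - real j)) Psi3 = of_real k * of_int (S (2^m - 1 - j))"
    unfolding k2 N_def[symmetric] braket_ind[OF y2N] P k_def ..
  ultimately show ?thesis using fin[OF S1] fin[OF S2] by simp
qed

end
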